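(* Let ${\mathsf P}$ be a finite point process on a Polish space $X$, let ${\mathbf T}$ be a thinning kernel, let ${\mathsf P}'$ be the thinning of ${\mathsf P}$, and let ${\mathbf Q}$ be a condensation kernel of ${\mathsf P}$ with respect to ${\mathbf T}$. Then for every measurable $g:\mathcal M_f(X)^4\to[0,\infty)$, $$\int g(\kappa,\mu,\lambda,\nu)\,{\mathbf T}_\nu(\{\kappa\})\,{\mathbf Q}_\lambda(\mathrm d\nu)\,{\mathbf T}_\mu(\mathrm d\lambda)\,{\mathbf Q}_\kappa(\mathrm d\mu)\,{\mathsf P}'(\mathrm d\kappa)$$ $$=\int g(\kappa,\mu,\lambda,\nu)\,{\mathbf T}_\mu(\{\kappa\})\,{\mathbf Q}_\lambda(\mathrm d\mu)\,{\mathbf T}_\nu(\mathrm d\lambda)\,{\mathbf Q}_\kappa(\mathrm d\nu)\,{\mathsf P}'(\mathrm d\kappa).$$ In other words, for ${\mathsf P}'$-a.e. $\kappa$, $${\mathbf T}_\nu(\{\kappa\})\,{\mathbf Q}_\lambda(\mathrm d\nu)\,{\mathbf T}_\mu(\mathrm d\lambda)\,{\mathbf Q}_\kappa(\mathrm d\mu)={\mathbf T}_\mu(\{\kappa\})\,{\mathbf Q}_\lambda(\mathrm d\mu)\,{\mathbf T}_\nu(\mathrm d\lambda)\,{\mathbf Q}_\kappa(\mathrm d\nu).$$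
   Context: $\mathcal M_f(X)$ denotes the set of finite counting measures on $X$, with the $\sigma$-algebra generated by $\mu\mapsto\mu(B)$. A finite point process is a probability measure on $\mathcal M_f(X)$. A thinning kernel is a stochastic kernel $\mu\mapsto{\mathbf T}_\mu$ from $\mathcal M_f(X)$ to $\mathcal M_f(X)$ with ${\mathbf T}_\mu$ concentrated on $\{\eta:\eta\le\mu\}$. The thinning of ${\mathsf P}$ is ${\mathsf P}'=\int{\mathbf T}_\mu\,{\mathsf P}(\mathrm d\mu)$. A condensation kernel is a stochastic kernel $\eta\mapsto{\mathbf Q}_\eta$ concentrated on $\{\mu:\mu\ge\eta\}$ such that $$\iint g(\eta,\mu)\,{\mathbf T}_\mu(\mathrm d\eta)\,{\mathsf P}(\mathrm d\mu)=\iint g(\eta,\mu)\,{\mathbf Q}_\eta(\mathrm d\mu)\,{\mathsf P}'(\mathrm d\eta)$$ for all non-negative measurable $g$. *)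

theory Defs
  imports "HOL-Probability.Probability" "HOL-Library.Multiset"
begin

text \<open>Finite counting measures on X are represented as finite multisets over X
  (point masses with multiplicity).\<close>

definition count_in :: "'a multiset \<Rightarrow> 'a set \<Rightarrow> nat" where
  "count_in \<mu> B = size (filter_mset (\<lambda>x. x \<in> B) \<mu>)"

definition Mf :: "'a::polish_space multiset measure" where
  "Mf = sigma UNIV {{\<mu>. count_in \<mu> B = n} | B n. B \<in> sets (borel :: 'a measure)}"

definition finite_point_process :: "'a::polish_space multiset measure \<Rightarrow> bool" where
  "finite_point_process P \<longleftrightarrow> P \<in> space (prob_algebra Mf)"

definition thinning_kernel :: "('a::polish_space multiset \<Rightarrow> 'a multiset measure) \<Rightarrow> bool" where
  "thinning_kernel T \<longleftrightarrow> T \<in> Mf \<rightarrow>\<^sub>M prob_algebra Mf \<and> (\<forall>\<mu>. AE \<eta> in T \<mu>. \<eta> \<subseteq># \<mu>)"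

definition thinning :: "'a::polish_space multiset measure \<Rightarrow> ('a multiset \<Rightarrow> 'a multiset measure) \<Rightarrow> 'a multiset measure" where
  "thinning P T = P \<bind> T"

definition condensation_kernel ::
  "'a::polish_space multiset measure \<Rightarrow> ('a multiset \<Rightarrow> 'a multiset measure) \<Rightarrow> ('a multiset \<Rightarrow> 'a multiset measure) \<Rightarrow> bool" where
  "condensation_kernel P T Q \<longleftrightarrow>
     Q \<in> Mf \<rightarrow>\<^sub>M prob_algebra Mf \<and> (\<forall>\<eta>. AE \<mu> in Q \<eta>. \<eta> \<subseteq># \<mu>) \<and>
     (\<forall>g :: 'a multiset \<Rightarrow> 'a multiset \<Rightarrow> real.
        (\<forall>\<eta> \<mu>. 0 \<le> g \<eta> \<mu>) \<longrightarrow> case_prod g \<in> borel_measurable (Mf \<Otimes>\<^sub>M Mf) \<longrightarrow>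
        (\<integral>\<^sup>+\<mu>. \<integral>\<^sup>+\<eta>. ennreal (g \<eta> \<mu>) \<partial>T \<mu> \<partial>P) =
        (\<integral>\<^sup>+\<eta>. \<integral>\<^sup>+\<mu>. ennreal (g \<eta> \<mu>) \<partial>Q \<eta> \<partial>thinning P T))"

end

theory Submission imports Defs begin

lemma space_Mf[simp]: "space Mf = UNIV"
  by (simp add: Mf_def)

lemma count_in_sets: "B \<in> sets (borel :: 'a::polish_space measure) \<Longrightarrow> {\<mu>. count_in \<mu> B = n} \<in> sets (Mf :: 'a multiset measure)"
  unfolding Mf_def by (subst sets_measure_of) auto

lemma count_in_single:
  assumes "\<And>y. y \<in># a \<Longrightarrow> y \<in> U \<longleftrightarrow> y = x"
  shows "count_in a U = count a x"
proof -
  have "filter_mset (\<lambda>y. y \<in> U) a = filter_mset (\<lambda>y. y = x) a"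
    using assms by (intro filter_mset_cong) auto
  thus ?thesis unfolding count_in_def by (simp add: filter_eq_replicate_mset)
qed

lemma diag_sets: "{p. fst p = snd p} \<in> sets ((Mf :: 'a::polish_space multiset measure) \<Otimes>\<^sub>M Mf)"
proof -
  obtain \<B> :: "'a set set" where B: "countable \<B>" "topological_basis \<B>"
    using ex_countable_basis by blast
  let ?D = "\<Inter>U\<in>\<B>. \<Union>n. {\<mu>::'a multiset. count_in \<mu> U = n} \<times> {\<mu>. count_in \<mu> U = n}"
  have eq: "{p. fst p = snd p} = ?D"
  proof (safe)
    fix a b :: "'a multiset" assume H: "(a, b) \<in> ?D"
    show "fst (a, b) = snd (a, b)"
    proof (rule ccontr)
      assume "fst (a, b) \<noteq> snd (a, b)"
      then obtain x where cx: "count a x \<noteq> count b x" by (auto simp: multiset_eq_iff)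
      let ?S = "set_mset (a + b) - {x}"
      have "open (- ?S)" by (intro open_Compl finite_imp_closed) auto
      moreover have "x \<in> - ?S" by auto
      ultimately obtain U where U: "U \<in> \<B>" "x \<in> U" "U \<subseteq> - ?S"
        using B(2) by (meson topological_basisE)
      have "count_in a U = count a x" by (rule count_in_single) (use U in auto)
      moreover have "count_in b U = count b x" by (rule count_in_single) (use U in auto)
      moreover have "count_in a U = count_in b U" using H U(1) by auto
      ultimately show False using cx by simp
    qed
  qed auto
  have "?D \<in> sets (Mf \<Otimes>\<^sub>M Mf)"
  proof (rule sets.countable_INT'')
    show "UNIV \<in> sets (Mf \<Otimes>\<^sub>M (Mf :: 'a multiset measure))"
      using sets.top[of "Mf \<Otimes>\<^sub>M Mf"] by (simp add: space_pair_measure)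
    fix U assume "U \<in> \<B>"
    then have "U \<in> sets borel" using B(2) topological_basis_open by (blast intro: borel_open)
    then show "(\<Union>n. {\<mu>::'a multiset. count_in \<mu> U = n} \<times> {\<mu>. count_in \<mu> U = n}) \<in> sets (Mf \<Otimes>\<^sub>M Mf)"
      by (intro sets.countable_UN') (auto intro!: pair_measureI count_in_sets)
  qed (use B in auto)
  with eq show ?thesis by simp
qed

lemma singleton_sets: "{x} \<in> sets (Mf :: 'a::polish_space multiset measure)"
proof -
  have "Pair x -` {p. fst p = snd p} \<in> sets (Mf :: 'a multiset measure)"
    using sets_Pair1[OF diag_sets] by simp
  moreover have "Pair x -` {p. fst p = snd p} = {x}" by auto
  ultimately show ?thesis by simp
qed

lemma swap_int:
  assumes "sets A = sets (Mf :: 'a::polish_space multiset measure)" "sets B = sets Mf"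
    "prob_space A" "prob_space B" "case_prod f \<in> borel_measurable (Mf \<Otimes>\<^sub>M Mf)"
  shows "(\<integral>\<^sup>+y. \<integral>\<^sup>+x. f x y \<partial>A \<partial>B) = (\<integral>\<^sup>+x. \<integral>\<^sup>+y. f x y \<partial>B \<partial>A)"
proof -
  interpret A: prob_space A by fact
  interpret B: prob_space B by fact
  interpret pair_sigma_finite A B ..
  have eq: "A \<Otimes>\<^sub>M B \<rightarrow>\<^sub>M (borel::ennreal measure) = Mf \<Otimes>\<^sub>M Mf \<rightarrow>\<^sub>M borel"
    by (rule measurable_cong_sets[OF sets_pair_measure_cong[OF assms(1,2)] refl])
  have "case_prod f \<in> borel_measurable (A \<Otimes>\<^sub>M B)"
    using assms(5) eq by simp
  thus ?thesis by (rule Fubini')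
qed

lemma kernelD:
  assumes "K \<in> Mf \<rightarrow>\<^sub>M prob_algebra (Mf :: 'a::polish_space multiset measure)"
  shows "sets (K x) = sets Mf" "prob_space (K x)" "space (K x) = UNIV"
proof -
  have "K x \<in> space (prob_algebra Mf)" using measurable_space[OF assms] by simp
  then show "sets (K x) = sets Mf" "prob_space (K x)" by (auto simp: space_prob_algebra)
  then show "space (K x) = UNIV" using sets_eq_imp_space_eq by fastforce
qed

lemma emeasure_singleton_int:
  assumes "sets A = sets (Mf :: 'a::polish_space multiset measure)"
  shows "emeasure A {k} = (\<integral>\<^sup>+k'. indicator {p. fst p = snd p} (k, k') \<partial>A)"
proof -
  have "{k} \<in> sets A" using assms singleton_sets by auto
  then have "emeasure A {k} = (\<integral>\<^sup>+k'. indicator {k} k' \<partial>A)" by simp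
  also have "\<dots> = (\<integral>\<^sup>+k'. indicator {p. fst p = snd p} (k, k') \<partial>A)"
    by (intro nn_integral_cong) (auto simp: indicator_def)
  finally show ?thesis .
qed

lemma diag_meas[measurable]: "{p. fst p = snd p} \<in> sets ((Mf :: 'a::polish_space multiset measure) \<Otimes>\<^sub>M Mf)"
  by (rule diag_sets)

lemma meas_transfer: "sets B = sets M \<Longrightarrow> f \<in> M \<rightarrow>\<^sub>M N \<Longrightarrow> f \<in> B \<rightarrow>\<^sub>M N"
  using measurable_cong_sets by blast

lemma sym_atoms:
  assumes "sets A = sets (Mf :: 'a::polish_space multiset measure)" "sets B = sets Mf"
    "prob_space A" "prob_space B" and h[measurable]: "h \<in> borel_measurable Mf"
  shows "(\<integral>\<^sup>+k. h k * emeasure B {k} \<partial>A) = (\<integral>\<^sup>+k. h k * emeasure A {k} \<partial>B)"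
proof -
  have m: "(\<lambda>(k, k'). h k * indicator {p. fst p = snd p} (k, k')) \<in> borel_measurable (Mf \<Otimes>\<^sub>M Mf)"
    by measurable
  have "(\<integral>\<^sup>+k. h k * emeasure B {k} \<partial>A) = (\<integral>\<^sup>+k. \<integral>\<^sup>+k'. h k * indicator {p. fst p = snd p} (k, k') \<partial>B \<partial>A)"
  proof (intro nn_integral_cong)
    fix k
    have mi0: "(\<lambda>k'. indicator {p. fst p = snd p} (k, k') :: ennreal) \<in> borel_measurable (Mf :: 'a multiset measure)"
      by measurable
    have mi: "(\<lambda>k'. indicator {p. fst p = snd p} (k, k') :: ennreal) \<in> borel_measurable B"
      by (rule meas_transfer[OF assms(2) mi0])
    show "h k * emeasure B {k} = (\<integral>\<^sup>+k'. h k * indicator {p. fst p = snd p} (k, k') \<partial>B)"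
      unfolding emeasure_singleton_int[OF assms(2)] by (rule nn_integral_cmult[OF mi, symmetric])
  qed
  also have "\<dots> = (\<integral>\<^sup>+k'. \<integral>\<^sup>+k. h k * indicator {p. fst p = snd p} (k, k') \<partial>A \<partial>B)"
    using swap_int[OF assms(1-4), of "\<lambda>k k'. h k * indicator {p. fst p = snd p} (k, k')"] m by simp
  also have "\<dots> = (\<integral>\<^sup>+k'. h k' * emeasure A {k'} \<partial>B)"
  proof (intro nn_integral_cong)
    fix k'
    have "{k'} \<in> sets A" using assms singleton_sets by auto
    have "(\<integral>\<^sup>+k. h k * indicator {p. fst p = snd p} (k, k') \<partial>A) = (\<integral>\<^sup>+k. h k' * indicator {k'} k \<partial>A)"
      by (intro nn_integral_cong) (auto simp: indicator_def)
    also have "\<dots> = h k' * emeasure A {k'}"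
      using \<open>{k'} \<in> sets A\<close> by (simp add: nn_integral_cmult_indicator)
    finally show "(\<integral>\<^sup>+k. h k * indicator {p. fst p = snd p} (k, k') \<partial>A) = h k' * emeasure A {k'}" .
  qed
  finally show ?thesis .
qed

lemma nested_SUP:
  fixes f :: "nat \<Rightarrow> 'a::polish_space multiset \<Rightarrow> 'a multiset \<Rightarrow> ennreal"
  assumes K[measurable]: "K \<in> Mf \<rightarrow>\<^sub>M prob_algebra Mf" and L: "sets L = sets (Mf :: 'a multiset measure)"
    and f[measurable]: "\<And>i. case_prod (f i) \<in> borel_measurable (Mf \<Otimes>\<^sub>M Mf)"
    and inc: "\<And>x y. incseq (\<lambda>i. f i x y)"
  shows "(\<integral>\<^sup>+x. \<integral>\<^sup>+y. (SUP i. f i x y) \<partial>K x \<partial>L) = (SUP i. \<integral>\<^sup>+x. \<integral>\<^sup>+y. f i x y \<partial>K x \<partial>L)"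
proof -
  have Ks: "K \<in> Mf \<rightarrow>\<^sub>M subprob_algebra Mf" using K by (rule measurable_prob_algebraD)
  have inner: "(\<integral>\<^sup>+y. (SUP i. f i x y) \<partial>K x) = (SUP i. \<integral>\<^sup>+y. f i x y \<partial>K x)" for x
  proof (rule nn_integral_monotone_convergence_SUP)
    show "incseq (\<lambda>i. f i x)" using inc by (auto simp: incseq_def le_fun_def)
    fix i
    have "f i x \<in> borel_measurable Mf" using f[of i] by measurable
    then show "f i x \<in> borel_measurable (K x)" by (rule meas_transfer[OF kernelD(1)[OF K]])
  qed
  have "(\<integral>\<^sup>+x. \<integral>\<^sup>+y. (SUP i. f i x y) \<partial>K x \<partial>L) = (\<integral>\<^sup>+x. (SUP i. \<integral>\<^sup>+y. f i x y \<partial>K x) \<partial>L)"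
    by (simp add: inner)
  also have "\<dots> = (SUP i. \<integral>\<^sup>+x. \<integral>\<^sup>+y. f i x y \<partial>K x \<partial>L)"
  proof (rule nn_integral_monotone_convergence_SUP)
    show "incseq (\<lambda>i x. \<integral>\<^sup>+y. f i x y \<partial>K x)"
      using inc by (auto simp: incseq_def le_fun_def intro!: nn_integral_mono)
    fix i
    have "(\<lambda>x. \<integral>\<^sup>+y. f i x y \<partial>K x) \<in> borel_measurable Mf"
      by (rule nn_integral_measurable_subprob_algebra2[OF f Ks])
    then show "(\<lambda>x. \<integral>\<^sup>+y. f i x y \<partial>K x) \<in> borel_measurable L" by (rule meas_transfer[OF L])
  qed
  finally show ?thesis .
qed

lemma thinning_prob:
  assumes "finite_point_process P" "thinning_kernel T"
  shows "thinning P T \<in> space (prob_algebra Mf)"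
proof -
  have P: "P \<in> space (prob_algebra Mf)" using assms(1) by (simp add: finite_point_process_def)
  have T: "T \<in> Mf \<rightarrow>\<^sub>M prob_algebra Mf" using assms(2) by (simp add: thinning_kernel_def)
  show ?thesis unfolding thinning_def
    using measurable_bind_prob_space[OF measurable_const, OF P T, THEN measurable_space, of undefined "count_space UNIV"]
    by simp
qed

lemma cond_enn:
  fixes G :: "'a::polish_space multiset \<Rightarrow> 'a multiset \<Rightarrow> ennreal"
  assumes P: "finite_point_process P" and T: "thinning_kernel T" and C: "condensation_kernel P T Q"
    and G[measurable]: "case_prod G \<in> borel_measurable (Mf \<Otimes>\<^sub>M Mf)"
  shows "(\<integral>\<^sup>+\<mu>. \<integral>\<^sup>+\<eta>. G \<eta> \<mu> \<partial>T \<mu> \<partial>P) = (\<integral>\<^sup>+\<eta>. \<integral>\<^sup>+\<mu>. G \<eta> \<mu> \<partial>Q \<eta> \<partial>thinning P T)"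
proof -
  define g where "g n \<eta> \<mu> = enn2real (min (G \<eta> \<mu>) (of_nat n))" for n \<eta> \<mu>
  have gm[measurable]: "case_prod (g n) \<in> borel_measurable (Mf \<Otimes>\<^sub>M Mf)" for n
    unfolding g_def by measurable
  have ge: "ennreal (g n \<eta> \<mu>) = min (G \<eta> \<mu>) (of_nat n)" for n \<eta> \<mu>
    unfolding g_def by (cases "G \<eta> \<mu> \<le> of_nat n")
      (auto simp: min_def ennreal_enn2real_if top_unique ennreal_of_nat_eq_real_of_nat[symmetric])
  have Gsup: "G \<eta> \<mu> = (SUP n. ennreal (g n \<eta> \<mu>))" for \<eta> \<mu>
  proof -
    have "G \<eta> \<mu> = inf (G \<eta> \<mu>) (SUP n. of_nat n)" by (simp add: ennreal_SUP_of_nat_eq_top)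
    also have "\<dots> = (SUP n. inf (G \<eta> \<mu>) (of_nat n))" by (simp add: inf_SUP)
    finally show ?thesis by (simp add: ge inf_min)
  qed
  have inc: "incseq (\<lambda>n. ennreal (g n \<eta> \<mu>))" for \<eta> \<mu>
    unfolding ge incseq_def by (auto intro!: min.coboundedI2)
  have Tk: "T \<in> Mf \<rightarrow>\<^sub>M prob_algebra Mf" using T by (simp add: thinning_kernel_def)
  have Qk: "Q \<in> Mf \<rightarrow>\<^sub>M prob_algebra Mf" using C by (simp add: condensation_kernel_def)
  have Ps: "sets P = sets Mf" using P by (simp add: finite_point_process_def space_prob_algebra)
  have P's: "sets (thinning P T) = sets Mf" using thinning_prob[OF P T] by (simp add: space_prob_algebra)
  have eqn: "(\<integral>\<^sup>+\<mu>. \<integral>\<^sup>+\<eta>. ennreal (g n \<eta> \<mu>) \<partial>T \<mu> \<partial>P) = (\<integral>\<^sup>+\<eta>. \<integral>\<^sup>+\<mu>. ennreal (g n \<eta> \<mu>) \<partial>Q \<eta> \<partial>thinning P T)" for n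
    using C gm[of n] unfolding condensation_kernel_def g_def by auto
  have m1: "case_prod (\<lambda>\<mu> \<eta>. ennreal (g n \<eta> \<mu>)) \<in> borel_measurable (Mf \<Otimes>\<^sub>M Mf)" for n
    by measurable
  have m2: "case_prod (\<lambda>\<eta> \<mu>. ennreal (g n \<eta> \<mu>)) \<in> borel_measurable (Mf \<Otimes>\<^sub>M Mf)" for n
    by measurable
  have "(\<integral>\<^sup>+\<mu>. \<integral>\<^sup>+\<eta>. G \<eta> \<mu> \<partial>T \<mu> \<partial>P) = (\<integral>\<^sup>+\<mu>. \<integral>\<^sup>+\<eta>. (SUP n. ennreal (g n \<eta> \<mu>)) \<partial>T \<mu> \<partial>P)"
    by (subst Gsup) simp
  also have "\<dots> = (SUP n. \<integral>\<^sup>+\<mu>. \<integral>\<^sup>+\<eta>. ennreal (g n \<eta> \<mu>) \<partial>T \<mu> \<partial>P)"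
    by (rule nested_SUP[OF Tk Ps m1 inc])
  also have "\<dots> = (SUP n. \<integral>\<^sup>+\<eta>. \<integral>\<^sup>+\<mu>. ennreal (g n \<eta> \<mu>) \<partial>Q \<eta> \<partial>thinning P T)"
    by (simp add: eqn)
  also have "\<dots> = (\<integral>\<^sup>+\<eta>. \<integral>\<^sup>+\<mu>. (SUP n. ennreal (g n \<eta> \<mu>)) \<partial>Q \<eta> \<partial>thinning P T)"
    by (rule nested_SUP[OF Qk P's m2 inc, symmetric])
  also have "\<dots> = (\<integral>\<^sup>+\<eta>. \<integral>\<^sup>+\<mu>. G \<eta> \<mu> \<partial>Q \<eta> \<partial>thinning P T)"
    by (simp only: Gsup[symmetric])
  finally show ?thesis .
qed

lemma nn_int_sub_raw[measurable (raw)]: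
  assumes "case_prod f \<in> borel_measurable (M \<Otimes>\<^sub>M (Mf :: 'a::polish_space multiset measure))" "L \<in> M \<rightarrow>\<^sub>M subprob_algebra (Mf :: 'a multiset measure)"
  shows "(\<lambda>x. integral\<^sup>N (L x) (f x)) \<in> borel_measurable M"
  using nn_integral_measurable_subprob_algebra2[OF assms] .

lemma test_meas:
  fixes H :: "'a::polish_space multiset \<Rightarrow> 'a multiset \<Rightarrow> 'a multiset \<Rightarrow> 'a multiset \<Rightarrow> ennreal"
  assumes T[measurable]: "T \<in> Mf \<rightarrow>\<^sub>M subprob_algebra (Mf :: 'a multiset measure)"
    and Q[measurable]: "Q \<in> Mf \<rightarrow>\<^sub>M subprob_algebra (Mf :: 'a multiset measure)"
    and H[measurable]: "(\<lambda>(\<kappa>, \<mu>, l, \<nu>). H \<kappa> \<mu> l \<nu>) \<in> borel_measurable (Mf \<Otimes>\<^sub>M Mf \<Otimes>\<^sub>M Mf \<Otimes>\<^sub>M Mf)"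
  shows "(\<lambda>(\<kappa>, \<mu>). \<integral>\<^sup>+l. \<integral>\<^sup>+\<nu>. H \<kappa> \<mu> l \<nu> \<partial>Q l \<partial>T \<mu>) \<in> borel_measurable (Mf \<Otimes>\<^sub>M Mf)"
  apply measurable
  subgoal by (rule measurable_compose[OF _ H, of "\<lambda>x. (fst (fst (fst x)), snd (fst (fst x)), snd (fst x), snd x)", simplified]) measurable
  subgoal by (rule measurable_compose[OF measurable_snd Q])
  subgoal by (rule measurable_compose[OF measurable_snd T])
  done

lemma chain:
  fixes H :: "'a::polish_space multiset \<Rightarrow> 'a multiset \<Rightarrow> 'a multiset \<Rightarrow> 'a multiset \<Rightarrow> ennreal"
  assumes P: "finite_point_process P" and T: "thinning_kernel T" and C: "condensation_kernel P T Q"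
    and H[measurable]: "(\<lambda>(\<kappa>, \<mu>, l, \<nu>). H \<kappa> \<mu> l \<nu>) \<in> borel_measurable (Mf \<Otimes>\<^sub>M Mf \<Otimes>\<^sub>M Mf \<Otimes>\<^sub>M Mf)"
  shows "(\<integral>\<^sup>+\<kappa>. \<integral>\<^sup>+\<mu>. \<integral>\<^sup>+l. \<integral>\<^sup>+\<nu>. H \<kappa> \<mu> l \<nu> \<partial>Q l \<partial>T \<mu> \<partial>Q \<kappa> \<partial>thinning P T)
       = (\<integral>\<^sup>+l. \<integral>\<^sup>+\<mu>. \<integral>\<^sup>+\<nu>. \<integral>\<^sup>+\<kappa>. H \<kappa> \<mu> l \<nu> \<partial>T \<mu> \<partial>Q l \<partial>Q l \<partial>thinning P T)"
proof -
  have Tk: "T \<in> Mf \<rightarrow>\<^sub>M prob_algebra Mf" using T by (simp add: thinning_kernel_def)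
  have Qk: "Q \<in> Mf \<rightarrow>\<^sub>M prob_algebra Mf" using C by (simp add: condensation_kernel_def)
  note Ts[measurable] = measurable_prob_algebraD[OF Tk]
  note Qs[measurable] = measurable_prob_algebraD[OF Qk]
  have H4[measurable (raw)]: "(\<lambda>x. H (a x) (b x) (c x) (d x)) \<in> borel_measurable M"
    if "a \<in> M \<rightarrow>\<^sub>M Mf" "b \<in> M \<rightarrow>\<^sub>M Mf" "c \<in> M \<rightarrow>\<^sub>M Mf" "d \<in> M \<rightarrow>\<^sub>M Mf" for M a b c d
    using measurable_compose[OF _ H, of "\<lambda>x. (a x, b x, c x, d x)"] that by simp
  have Tc[measurable (raw)]: "(\<lambda>x. T (a x)) \<in> M \<rightarrow>\<^sub>M subprob_algebra Mf" if "a \<in> M \<rightarrow>\<^sub>M Mf" for M a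
    by (rule measurable_compose[OF that Ts])
  have Qc[measurable (raw)]: "(\<lambda>x. Q (a x)) \<in> M \<rightarrow>\<^sub>M subprob_algebra Mf" if "a \<in> M \<rightarrow>\<^sub>M Mf" for M a
    by (rule measurable_compose[OF that Qs])
  have G1: "(\<lambda>(\<kappa>, \<mu>). \<integral>\<^sup>+l. \<integral>\<^sup>+\<nu>. H \<kappa> \<mu> l \<nu> \<partial>Q l \<partial>T \<mu>) \<in> borel_measurable (Mf \<Otimes>\<^sub>M Mf)"
    by measurable
  have G2: "(\<lambda>(l, \<mu>). \<integral>\<^sup>+\<nu>. \<integral>\<^sup>+\<kappa>. H \<kappa> \<mu> l \<nu> \<partial>T \<mu> \<partial>Q l) \<in> borel_measurable (Mf \<Otimes>\<^sub>M Mf)"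
    by measurable
  have "(\<integral>\<^sup>+\<kappa>. \<integral>\<^sup>+\<mu>. \<integral>\<^sup>+l. \<integral>\<^sup>+\<nu>. H \<kappa> \<mu> l \<nu> \<partial>Q l \<partial>T \<mu> \<partial>Q \<kappa> \<partial>thinning P T)
      = (\<integral>\<^sup>+\<mu>. \<integral>\<^sup>+\<kappa>. \<integral>\<^sup>+l. \<integral>\<^sup>+\<nu>. H \<kappa> \<mu> l \<nu> \<partial>Q l \<partial>T \<mu> \<partial>T \<mu> \<partial>P)"
    using cond_enn[OF P T C G1] by simp
  also have "\<dots> = (\<integral>\<^sup>+\<mu>. \<integral>\<^sup>+l. \<integral>\<^sup>+\<kappa>. \<integral>\<^sup>+\<nu>. H \<kappa> \<mu> l \<nu> \<partial>Q l \<partial>T \<mu> \<partial>T \<mu> \<partial>P)"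
  proof (rule nn_integral_cong)
    fix \<mu>
    have m: "(\<lambda>(l, \<kappa>). \<integral>\<^sup>+\<nu>. H \<kappa> \<mu> l \<nu> \<partial>Q l) \<in> borel_measurable (Mf \<Otimes>\<^sub>M Mf)"
      by measurable
    show "(\<integral>\<^sup>+\<kappa>. \<integral>\<^sup>+l. \<integral>\<^sup>+\<nu>. H \<kappa> \<mu> l \<nu> \<partial>Q l \<partial>T \<mu> \<partial>T \<mu>) = (\<integral>\<^sup>+l. \<integral>\<^sup>+\<kappa>. \<integral>\<^sup>+\<nu>. H \<kappa> \<mu> l \<nu> \<partial>Q l \<partial>T \<mu> \<partial>T \<mu>)"
      using swap_int[OF kernelD(1)[OF Tk] kernelD(1)[OF Tk] kernelD(2)[OF Tk] kernelD(2)[OF Tk] m] by simp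
  qed
  also have "\<dots> = (\<integral>\<^sup>+\<mu>. \<integral>\<^sup>+l. \<integral>\<^sup>+\<nu>. \<integral>\<^sup>+\<kappa>. H \<kappa> \<mu> l \<nu> \<partial>T \<mu> \<partial>Q l \<partial>T \<mu> \<partial>P)"
  proof (rule nn_integral_cong, rule nn_integral_cong)
    fix \<mu> l
    have m: "(\<lambda>(\<nu>, \<kappa>). H \<kappa> \<mu> l \<nu>) \<in> borel_measurable (Mf \<Otimes>\<^sub>M Mf)"
      by measurable
    show "(\<integral>\<^sup>+\<kappa>. \<integral>\<^sup>+\<nu>. H \<kappa> \<mu> l \<nu> \<partial>Q l \<partial>T \<mu>) = (\<integral>\<^sup>+\<nu>. \<integral>\<^sup>+\<kappa>. H \<kappa> \<mu> l \<nu> \<partial>T \<mu> \<partial>Q l)"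
      using swap_int[OF kernelD(1)[OF Qk] kernelD(1)[OF Tk] kernelD(2)[OF Qk] kernelD(2)[OF Tk] m] by simp
  qed
  also have "\<dots> = (\<integral>\<^sup>+l. \<integral>\<^sup>+\<mu>. \<integral>\<^sup>+\<nu>. \<integral>\<^sup>+\<kappa>. H \<kappa> \<mu> l \<nu> \<partial>T \<mu> \<partial>Q l \<partial>Q l \<partial>thinning P T)"
    using cond_enn[OF P T C G2] by simp
  finally show ?thesis .
qed

lemma emeasure_kernel_meas:
  assumes Tk: "T \<in> Mf \<rightarrow>\<^sub>M prob_algebra (Mf :: 'a::polish_space multiset measure)"
    and a: "a \<in> M \<rightarrow>\<^sub>M Mf" and b: "b \<in> M \<rightarrow>\<^sub>M (Mf :: 'a multiset measure)"
  shows "(\<lambda>x. emeasure (T (a x)) {b x}) \<in> borel_measurable M"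
proof -
  note Ts[measurable] = measurable_prob_algebraD[OF Tk]
  note [measurable] = a b
  have Tc[measurable]: "(\<lambda>x. T (a x)) \<in> M \<rightarrow>\<^sub>M subprob_algebra Mf"
    by (rule measurable_compose[OF a Ts])
  have f: "(\<lambda>(x, k'). indicator {p. fst p = snd p} (b x, k') :: ennreal) \<in> borel_measurable (M \<Otimes>\<^sub>M Mf)"
    by measurable
  have "(\<lambda>x. \<integral>\<^sup>+k'. indicator {p. fst p = snd p} (b x, k') \<partial>T (a x)) \<in> borel_measurable M"
    using nn_integral_measurable_subprob_algebra2[OF f Tc] by simp
  moreover have "emeasure (T (a x)) {b x} = (\<integral>\<^sup>+k'. indicator {p. fst p = snd p} (b x, k') \<partial>T (a x))" for x
    by (rule emeasure_singleton_int[OF kernelD(1)[OF Tk]])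
  ultimately show ?thesis by simp
qed

theorem mainTheorem8:
  fixes P :: "'a::polish_space multiset measure"
    and T Q :: "'a multiset \<Rightarrow> 'a multiset measure"
    and g :: "'a multiset \<Rightarrow> 'a multiset \<Rightarrow> 'a multiset \<Rightarrow> 'a multiset \<Rightarrow> real"
  assumes "finite_point_process P"
    and "thinning_kernel T"
    and "condensation_kernel P T Q"
    and "\<And>\<kappa> \<mu> l \<nu>. 0 \<le> g \<kappa> \<mu> l \<nu>"
    and "(\<lambda>(\<kappa>, \<mu>, l, \<nu>). g \<kappa> \<mu> l \<nu>) \<in> borel_measurable (Mf \<Otimes>\<^sub>M Mf \<Otimes>\<^sub>M Mf \<Otimes>\<^sub>M Mf)"
  shows "(\<integral>\<^sup>+\<kappa>. \<integral>\<^sup>+\<mu>. \<integral>\<^sup>+l. \<integral>\<^sup>+\<nu>. ennreal (g \<kappa> \<mu> l \<nu>) * emeasure (T \<nu>) {\<kappa>}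
             \<partial>Q l \<partial>T \<mu> \<partial>Q \<kappa> \<partial>thinning P T)
       = (\<integral>\<^sup>+\<kappa>. \<integral>\<^sup>+\<nu>. \<integral>\<^sup>+l. \<integral>\<^sup>+\<mu>. ennreal (g \<kappa> \<mu> l \<nu>) * emeasure (T \<mu>) {\<kappa>}
             \<partial>Q l \<partial>T \<nu> \<partial>Q \<kappa> \<partial>thinning P T)"
proof -
  note P = assms(1) and T = assms(2) and C = assms(3)
  note gm[measurable] = assms(5)
  have Tk: "T \<in> Mf \<rightarrow>\<^sub>M prob_algebra Mf" using T by (simp add: thinning_kernel_def)
  have Qk: "Q \<in> Mf \<rightarrow>\<^sub>M prob_algebra Mf" using C by (simp add: condensation_kernel_def)
  have g4[measurable (raw)]: "(\<lambda>x. g (a x) (b x) (c x) (d x)) \<in> borel_measurable M"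
    if "a \<in> M \<rightarrow>\<^sub>M Mf" "b \<in> M \<rightarrow>\<^sub>M Mf" "c \<in> M \<rightarrow>\<^sub>M Mf" "d \<in> M \<rightarrow>\<^sub>M Mf" for M a b c d
    using measurable_compose[OF _ gm, of "\<lambda>x. (a x, b x, c x, d x)"] that by simp
  have em[measurable (raw)]: "(\<lambda>x. emeasure (T (a x)) {b x}) \<in> borel_measurable M"
    if "a \<in> M \<rightarrow>\<^sub>M Mf" "b \<in> M \<rightarrow>\<^sub>M Mf" for M a b
    by (rule emeasure_kernel_meas[OF Tk that])
  have H1: "(\<lambda>(\<kappa>, \<mu>, l, \<nu>). ennreal (g \<kappa> \<mu> l \<nu>) * emeasure (T \<nu>) {\<kappa>}) \<in> borel_measurable (Mf \<Otimes>\<^sub>M Mf \<Otimes>\<^sub>M Mf \<Otimes>\<^sub>M Mf)"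
    by measurable
  have H2: "(\<lambda>(\<kappa>, a, l, b). ennreal (g \<kappa> b l a) * emeasure (T b) {\<kappa>}) \<in> borel_measurable (Mf \<Otimes>\<^sub>M Mf \<Otimes>\<^sub>M Mf \<Otimes>\<^sub>M Mf)"
    by measurable
  have "?thesis \<longleftrightarrow> (\<integral>\<^sup>+l. \<integral>\<^sup>+\<mu>. \<integral>\<^sup>+\<nu>. \<integral>\<^sup>+\<kappa>. ennreal (g \<kappa> \<mu> l \<nu>) * emeasure (T \<nu>) {\<kappa>} \<partial>T \<mu> \<partial>Q l \<partial>Q l \<partial>thinning P T)
     = (\<integral>\<^sup>+l. \<integral>\<^sup>+a. \<integral>\<^sup>+b. \<integral>\<^sup>+\<kappa>. ennreal (g \<kappa> b l a) * emeasure (T b) {\<kappa>} \<partial>T a \<partial>Q l \<partial>Q l \<partial>thinning P T)"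
    unfolding chain[OF P T C H1] chain[OF P T C H2] ..
  also have "(\<integral>\<^sup>+l. \<integral>\<^sup>+a. \<integral>\<^sup>+b. \<integral>\<^sup>+\<kappa>. ennreal (g \<kappa> b l a) * emeasure (T b) {\<kappa>} \<partial>T a \<partial>Q l \<partial>Q l \<partial>thinning P T)
     = (\<integral>\<^sup>+l. \<integral>\<^sup>+a. \<integral>\<^sup>+b. \<integral>\<^sup>+\<kappa>. ennreal (g \<kappa> b l a) * emeasure (T a) {\<kappa>} \<partial>T b \<partial>Q l \<partial>Q l \<partial>thinning P T)"
  proof (rule nn_integral_cong, rule nn_integral_cong, rule nn_integral_cong)
    fix l a b
    have h: "(\<lambda>\<kappa>. ennreal (g \<kappa> b l a)) \<in> borel_measurable Mf" by measurable
    show "(\<integral>\<^sup>+\<kappa>. ennreal (g \<kappa> b l a) * emeasure (T b) {\<kappa>} \<partial>T a) = (\<integral>\<^sup>+\<kappa>. ennreal (g \<kappa> b l a) * emeasure (T a) {\<kappa>} \<partial>T b)"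
      by (rule sym_atoms[OF kernelD(1)[OF Tk] kernelD(1)[OF Tk] kernelD(2)[OF Tk] kernelD(2)[OF Tk] h])
  qed
  also have "\<dots> = (\<integral>\<^sup>+l. \<integral>\<^sup>+b. \<integral>\<^sup>+a. \<integral>\<^sup>+\<kappa>. ennreal (g \<kappa> b l a) * emeasure (T a) {\<kappa>} \<partial>T b \<partial>Q l \<partial>Q l \<partial>thinning P T)"
  proof (rule nn_integral_cong)
    fix l
    have Tsub[measurable]: "T \<in> Mf \<rightarrow>\<^sub>M subprob_algebra Mf" by (rule measurable_prob_algebraD[OF Tk])
    have Tc[measurable (raw)]: "(\<lambda>x. T (c x)) \<in> M \<rightarrow>\<^sub>M subprob_algebra Mf" if "c \<in> M \<rightarrow>\<^sub>M Mf" for M c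
      by (rule measurable_compose[OF that Tsub])
    have m: "(\<lambda>(b, a). \<integral>\<^sup>+\<kappa>. ennreal (g \<kappa> b l a) * emeasure (T a) {\<kappa>} \<partial>T b) \<in> borel_measurable (Mf \<Otimes>\<^sub>M Mf)"
      by measurable
    show "(\<integral>\<^sup>+a. \<integral>\<^sup>+b. \<integral>\<^sup>+\<kappa>. ennreal (g \<kappa> b l a) * emeasure (T a) {\<kappa>} \<partial>T b \<partial>Q l \<partial>Q l)
        = (\<integral>\<^sup>+b. \<integral>\<^sup>+a. \<integral>\<^sup>+\<kappa>. ennreal (g \<kappa> b l a) * emeasure (T a) {\<kappa>} \<partial>T b \<partial>Q l \<partial>Q l)"
      using swap_int[OF kernelD(1)[OF Qk] kernelD(1)[OF Qk] kernelD(2)[OF Qk] kernelD(2)[OF Qk] m] by simp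
  qed
  finally show ?thesis by simp
qed

end
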